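(* Let $N=\{1,\dots,n\}$ and $C:2^N\to\mathbb{R}_{\ge0}$. If $\psi\in\mathbb{R}^n$ is in the core of $C$, i.e. $\sum_{i\in N}\psi_i=C(N)$ and $\sum_{i\in S}\psi_i\le C(S)$ for all $S\subseteq N$, then $\|\psi\|_1\le2\max_{S\subseteq N}|C(S)|$. *)

theory Defs
  imports Complex_Main
begin

definition in_core :: "nat \<Rightarrow> (nat set \<Rightarrow> real) \<Rightarrow> (nat \<Rightarrow> real) \<Rightarrow> bool" where
  "in_core n C psi \<longleftrightarrow>
     (\<Sum>i\<in>{1..n}. psi i) = C {1..n} \<and>
     (\<forall>S. S \<subseteq> {1..n} \<longrightarrow> (\<Sum>i\<in>S. psi i) \<le> C S)"

end

theory Submission
  imports Defs
begin

theorem lemma2: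
  fixes n :: nat and C :: "nat set \<Rightarrow> real" and psi :: "nat \<Rightarrow> real"
  assumes nonneg: "\<And>S. S \<subseteq> {1..n} \<Longrightarrow> C S \<ge> 0"
    and core: "in_core n C psi"
  shows "(\<Sum>i\<in>{1..n}. \<bar>psi i\<bar>) \<le> 2 * (MAX S \<in> Pow {1..n}. \<bar>C S\<bar>)"
proof -
  define P where "P = {i\<in>{1..n}. psi i \<ge> 0}"
  define Q where "Q = {i\<in>{1..n}. \<not> psi i \<ge> 0}"
  have fin: "finite P" "finite Q" unfolding P_def Q_def by auto
  have PQ: "{1..n} = P \<union> Q" "P \<inter> Q = {}" unfolding P_def Q_def by auto
  have tot: "(\<Sum>i\<in>{1..n}. psi i) = C {1..n}" and le: "\<And>S. S \<subseteq> {1..n} \<Longrightarrow> (\<Sum>i\<in>S. psi i) \<le> C S"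
    using core unfolding in_core_def by auto
  have s1: "(\<Sum>i\<in>{1..n}. psi i) = (\<Sum>i\<in>P. psi i) + (\<Sum>i\<in>Q. psi i)"
    using PQ fin by (simp add: sum.union_disjoint)
  have s2: "(\<Sum>i\<in>{1..n}. \<bar>psi i\<bar>) = (\<Sum>i\<in>P. \<bar>psi i\<bar>) + (\<Sum>i\<in>Q. \<bar>psi i\<bar>)"
    using PQ fin by (simp add: sum.union_disjoint)
  have a1: "(\<Sum>i\<in>P. \<bar>psi i\<bar>) = (\<Sum>i\<in>P. psi i)" by (rule sum.cong) (auto simp: P_def)
  have a2: "(\<Sum>i\<in>Q. \<bar>psi i\<bar>) = - (\<Sum>i\<in>Q. psi i)"
    by (simp add: sum_negf[symmetric], rule sum.cong) (auto simp: Q_def)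
  have PN: "P \<subseteq> {1..n}" unfolding P_def by auto
  have M: "\<And>S. S \<subseteq> {1..n} \<Longrightarrow> \<bar>C S\<bar> \<le> (MAX S \<in> Pow {1..n}. \<bar>C S\<bar>)"
    by (rule Max_ge) auto
  have "(\<Sum>i\<in>{1..n}. \<bar>psi i\<bar>) = 2 * (\<Sum>i\<in>P. psi i) - C {1..n}"
    using s1 s2 a1 a2 tot by linarith
  also have "\<dots> \<le> 2 * C P" using le[OF PN] nonneg[of "{1..n}"] by auto
  also have "\<dots> \<le> 2 * (MAX S \<in> Pow {1..n}. \<bar>C S\<bar>)" using M[OF PN] by auto
  finally show ?thesis .
qed

end
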